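(* For every set $P$ of $n\ge 2$ points in the plane in general position, the graph $G_\bigtriangledown(P)$ contains a matching of size at least $\left\lceil\frac{n-2}{3}\right\rceil$.
   Context: A finite point set $P$ in the plane is in general position if no line through two points of $P$ makes an angle of $0^\circ$, $60^\circ$ or $120^\circ$ with the horizontal. A down-triangle is an equilateral triangle with one side parallel to the $x$-axis and the corner opposite to this side below that side. $G_\bigtriangledown(P)$ is the graph with vertex set $P$ in which $p,q$ are adjacent iff some (closed) down-triangle contains $p$ and $q$ and no other point of $P$. A matching is a set of pairwise vertex-disjoint edges. *)

theory Defs
  imports Complex_Main
begin

type_synonym point = "real \<times> real"

text \<open>General position: no line through two distinct points of P makes an angle of
0, 60 or 120 degrees with the horizontal axis.\<close>
definition general_position :: "point set \<Rightarrow> bool" where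
  "general_position P \<longleftrightarrow>
     (\<forall>p\<in>P. \<forall>q\<in>P. p \<noteq> q \<longrightarrow>
        snd q - snd p \<noteq> 0 \<and>
        snd q - snd p \<noteq> sqrt 3 * (fst q - fst p) \<and>
        snd q - snd p \<noteq> - sqrt 3 * (fst q - fst p))"

text \<open>The closed down-triangle whose horizontal (top) side is the segment from (a,c) to
(a+s,c), s \<ge> 0, and whose third corner (a+s/2, c - s*sqrt 3/2) lies below that side.\<close>
definition down_triangle :: "real \<Rightarrow> real \<Rightarrow> real \<Rightarrow> point set" where
  "down_triangle a c s =
     {(x, y). y \<le> c \<and> y \<ge> c - sqrt 3 * (x - a) \<and> y \<ge> c + sqrt 3 * (x - a - s)}"

definition down_adj :: "point set \<Rightarrow> point \<Rightarrow> point \<Rightarrow> bool" where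
  "down_adj P p q \<longleftrightarrow> p \<in> P \<and> q \<in> P \<and> p \<noteq> q \<and>
     (\<exists>a c s. s \<ge> 0 \<and> p \<in> down_triangle a c s \<and> q \<in> down_triangle a c s \<and>
        P \<inter> down_triangle a c s \<subseteq> {p, q})"

definition down_matching :: "point set \<Rightarrow> point set set \<Rightarrow> bool" where
  "down_matching P M \<longleftrightarrow>
     (\<forall>e\<in>M. \<exists>p q. e = {p, q} \<and> down_adj P p q) \<and>
     (\<forall>e\<in>M. \<forall>f\<in>M. e \<noteq> f \<longrightarrow> e \<inter> f = {})"

end

theory Submission
  imports Defs
begin


lemma ex_min_on:
  fixes f :: "'a \<Rightarrow> real"
  assumes "finite S" "S \<noteq> {}"
  shows "\<exists>x\<in>S. \<forall>y\<in>S. f x \<le> f y"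
proof -
  have "Min (f ` S) \<in> f ` S" using assms by simp
  then obtain x where x: "x \<in> S" "f x = Min (f ` S)" by auto
  show ?thesis using x assms by (intro bexI[of _ x]) auto
qed

lemma ex_max_on:
  fixes f :: "'a \<Rightarrow> real"
  assumes "finite S" "S \<noteq> {}"
  shows "\<exists>x\<in>S. \<forall>y\<in>S. f y \<le> f x"
proof -
  have "Max (f ` S) \<in> f ` S" using assms by simp
  then obtain x where x: "x \<in> S" "f x = Max (f ` S)" by auto
  show ?thesis using x assms by (intro bexI[of _ x]) auto
qed

lemma forest_matching:
  fixes V :: "'a set" and par :: "'a \<Rightarrow> 'a option" and \<rho> :: "'a \<Rightarrow> real"
  assumes "finite V"
   and "\<And>v p. v \<in> V \<Longrightarrow> par v = Some p \<Longrightarrow> p \<in> V \<and> \<rho> v < \<rho> p"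
   and "\<And>p. p \<in> V \<Longrightarrow> card {v\<in>V. par v = Some p} \<le> 2"
  shows "\<exists>M. (\<forall>e\<in>M. \<exists>v p. e = {v,p} \<and> v \<in> V \<and> par v = Some p) \<and>
             (\<forall>e\<in>M. \<forall>f\<in>M. e \<noteq> f \<longrightarrow> e \<inter> f = {}) \<and> finite M \<and>
             card V \<le> 3 * card M + card {v\<in>V. par v = None}"
  using assms
proof (induction "card V" arbitrary: V rule: less_induct)
  case less
  note fin = less.prems(1) and parV = less.prems(2) and ch2 = less.prems(3)
  show ?case
  proof (cases "\<exists>v\<in>V. par v \<noteq> None")
    case False
    then have "{v\<in>V. par v = None} = V" by auto
    then show ?thesis by (intro exI[of _ "{}"]) auto
  next
    case True
    define Q where "Q = {p\<in>V. \<exists>v\<in>V. par v = Some p}"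
    have finQ: "finite Q" using fin unfolding Q_def by (rule finite_subset[rotated]) auto
    have "Q \<noteq> {}"
    proof -
      obtain v where v: "v \<in> V" "par v \<noteq> None" using True by blast
      then obtain q where q: "par v = Some q" by blast
      have "q \<in> V" using parV[OF v(1) q] by blast
      then have "q \<in> Q" using v(1) q unfolding Q_def by blast
      then show ?thesis by blast
    qed
    then obtain p where pQ: "p \<in> Q" and pmin: "\<forall>q\<in>Q. \<rho> p \<le> \<rho> q"
      using ex_min_on[OF finQ] by blast
    have pV: "p \<in> V" using pQ Q_def by auto
    define C where "C = {v\<in>V. par v = Some p}"
    have CV: "C \<subseteq> V" unfolding C_def by auto
    have Cne: "C \<noteq> {}" using pQ unfolding Q_def C_def by auto
    have finC: "finite C" using CV fin finite_subset by auto
    have cardC: "card C \<le> 2" using ch2[OF pV] unfolding C_def .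
    have pC: "p \<notin> C" using parV[of p p] unfolding C_def by auto
    have nochild: "\<And>c v. c \<in> C \<Longrightarrow> v \<in> V \<Longrightarrow> par v \<noteq> Some c"
    proof
      fix c v assume c: "c \<in> C" and v: "v \<in> V" and pv: "par v = Some c"
      then have "c \<in> Q" using CV unfolding Q_def by auto
      then have "\<rho> p \<le> \<rho> c" using pmin by auto
      moreover have "\<rho> c < \<rho> p" using parV[of c p] c unfolding C_def by auto
      ultimately show False by simp
    qed
    define V' where "V' = V - insert p C"
    have V'sub: "V' \<subseteq> V" unfolding V'_def by auto
    have sub: "insert p C \<subseteq> V" using CV pV by auto
    have cardV: "card V = card V' + card (insert p C)"
    proof -
      have "card V' = card V - card (insert p C)" unfolding V'_def
        using card_Diff_subset[OF finite_subset[OF sub fin] sub] .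
      moreover have "card (insert p C) \<le> card V" using card_mono[OF fin sub] .
      ultimately show ?thesis by linarith
    qed
    have cardI: "card (insert p C) = Suc (card C)" using finC pC by simp
    have cardC1: "card C \<ge> 1" using Cne finC by (simp add: Suc_leI card_gt_0_iff)
    have "card V' < card V" using cardV cardI by simp
    moreover have "finite V'" using fin V'sub finite_subset by auto
    moreover have "\<And>v q. v \<in> V' \<Longrightarrow> par v = Some q \<Longrightarrow> q \<in> V' \<and> \<rho> v < \<rho> q"
    proof -
      fix v q assume v: "v \<in> V'" and pv: "par v = Some q"
      have vV: "v \<in> V" using v V'sub by auto
      have "q \<noteq> p" using v pv unfolding V'_def C_def by auto
      moreover have "q \<notin> C" using nochild[of q v] vV pv by auto
      ultimately show "q \<in> V' \<and> \<rho> v < \<rho> q" using parV[OF vV pv] unfolding V'_def by auto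
    qed
    moreover have "\<And>q. q \<in> V' \<Longrightarrow> card {v\<in>V'. par v = Some q} \<le> 2"
    proof -
      fix q assume q: "q \<in> V'"
      have "{v\<in>V'. par v = Some q} \<subseteq> {v\<in>V. par v = Some q}" using V'sub by auto
      then have "card {v\<in>V'. par v = Some q} \<le> card {v\<in>V. par v = Some q}"
        using fin by (intro card_mono) auto
      then show "card {v\<in>V'. par v = Some q} \<le> 2" using ch2[of q] q V'sub by auto
    qed
    ultimately have "\<exists>M. (\<forall>e\<in>M. \<exists>v p. e = {v,p} \<and> v \<in> V' \<and> par v = Some p) \<and>
             (\<forall>e\<in>M. \<forall>f\<in>M. e \<noteq> f \<longrightarrow> e \<inter> f = {}) \<and> finite M \<and>
             card V' \<le> 3 * card M + card {v\<in>V'. par v = None}"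
      by (rule less.hyps)
    then obtain M' where M'e: "\<forall>e\<in>M'. \<exists>v p. e = {v,p} \<and> v \<in> V' \<and> par v = Some p"
      and M'd: "\<forall>e\<in>M'. \<forall>f\<in>M'. e \<noteq> f \<longrightarrow> e \<inter> f = {}" and M'f: "finite M'"
      and M'c: "card V' \<le> 3 * card M' + card {v\<in>V'. par v = None}"
      by blast
    have M'sub: "\<And>e. e \<in> M' \<Longrightarrow> e \<subseteq> V'"
    proof -
      fix e assume "e \<in> M'"
      then obtain v q where e: "e = {v,q}" "v \<in> V'" "par v = Some q" using M'e by blast
      have "q \<in> V'" using \<open>\<And>v q. v \<in> V' \<Longrightarrow> par v = Some q \<Longrightarrow> q \<in> V' \<and> \<rho> v < \<rho> q\<close> e by blast
      then show "e \<subseteq> V'" using e by auto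
    qed
    obtain c where cC: "c \<in> C" using Cne by auto
    have cV': "c \<notin> V'" "p \<notin> V'" using cC unfolding V'_def by auto
    define M where "M = insert {c,p} M'"
    have notin: "{c,p} \<notin> M'" using M'sub cV' by blast
    have cardM: "card M = Suc (card M')" unfolding M_def using notin M'f by simp
    have disj: "\<And>e. e \<in> M' \<Longrightarrow> e \<inter> {c,p} = {}" using M'sub cV' by blast
    have roots: "card {v\<in>V'. par v = None} \<le> card {v\<in>V. par v = None}"
      using fin V'sub by (intro card_mono) auto
    show ?thesis
    proof (intro exI[of _ M] conjI)
      show "\<forall>e\<in>M. \<exists>v p. e = {v,p} \<and> v \<in> V \<and> par v = Some p"
      proof
        fix e assume "e \<in> M"
        then consider "e = {c,p}" | "e \<in> M'" unfolding M_def by blast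
        then show "\<exists>v p. e = {v,p} \<and> v \<in> V \<and> par v = Some p"
        proof cases
          case 1
          have "c \<in> V" "par c = Some p" using cC unfolding C_def by auto
          then show ?thesis using 1 by blast
        next
          case 2
          then obtain v q where "e = {v,q}" "v \<in> V'" "par v = Some q" using M'e by blast
          then show ?thesis using V'sub by blast
        qed
      qed
      show "\<forall>e\<in>M. \<forall>f\<in>M. e \<noteq> f \<longrightarrow> e \<inter> f = {}"
      proof (intro ballI impI)
        fix e f assume e: "e \<in> M" and f: "f \<in> M" and ne: "e \<noteq> f"
        show "e \<inter> f = {}"
        proof (cases "e = {c,p}")
          case True
          then have "f \<in> M'" using f ne unfolding M_def by blast
          then show ?thesis using disj[of f] True by blast
        next
          case False
          then have eM: "e \<in> M'" using e unfolding M_def by blast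
          show ?thesis
          proof (cases "f = {c,p}")
            case True
            then show ?thesis using disj[OF eM] by blast
          next
            case False
            then have "f \<in> M'" using f unfolding M_def by blast
            then show ?thesis using M'd eM ne by blast
          qed
        qed
      qed
      show "finite M" unfolding M_def using M'f by simp
      show "card V \<le> 3 * card M + card {v\<in>V. par v = None}"
        using cardV cardI cardM M'c roots cardC by linarith
    qed
  qed
qed




definition bb :: "point \<Rightarrow> real" where "bb p = snd p + sqrt 3 * fst p"
definition cc :: "point \<Rightarrow> real" where "cc p = snd p - sqrt 3 * fst p"

lemma bc_sum: "bb p + cc p = 2 * snd p"
  unfolding bb_def cc_def by simp

definition dm :: "point \<Rightarrow> point \<Rightarrow> bool" where
  "dm x v \<longleftrightarrow> bb v < bb x \<and> cc v < cc x"

lemma dm_snd: "dm x v \<Longrightarrow> snd v < snd x"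
  using bc_sum[of x] bc_sum[of v] unfolding dm_def by linarith

lemma dm_trans: "dm x v \<Longrightarrow> dm v w \<Longrightarrow> dm x w"
  unfolding dm_def by auto

lemma sqrt3_div: "sqrt 3 * (u / sqrt 3) = u"
  by simp

lemma mem_tri:
  fixes c0 B0 C0 :: real
  shows "z \<in> down_triangle ((B0 - c0) / sqrt 3) c0 ((2 * c0 - B0 - C0) / sqrt 3) \<longleftrightarrow>
         snd z \<le> c0 \<and> B0 \<le> bb z \<and> C0 \<le> cc z"
proof -
  obtain x y where z: "z = (x, y)" by fastforce
  have e1: "sqrt 3 * ((B0 - c0) / sqrt 3) = B0 - c0" by (rule sqrt3_div)
  have e2: "sqrt 3 * ((2 * c0 - B0 - C0) / sqrt 3) = 2 * c0 - B0 - C0" by (rule sqrt3_div)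
  have h1: "sqrt 3 * (x - (B0 - c0) / sqrt 3) = sqrt 3 * x - (B0 - c0)"
    unfolding right_diff_distrib[of "sqrt 3"] e1 by (rule refl)
  have h2: "sqrt 3 * (x - (B0 - c0) / sqrt 3 - (2 * c0 - B0 - C0) / sqrt 3) = sqrt 3 * x - c0 + C0"
    unfolding right_diff_distrib[of "sqrt 3"] e1 e2 by linarith
  show ?thesis unfolding down_triangle_def z bb_def cc_def using h1 h2 by auto
qed

lemma adj_intro:
  assumes "p \<in> P" "q \<in> P" "p \<noteq> q"
    and H: "\<And>z. z \<in> P \<Longrightarrow> snd z \<le> max (snd p) (snd q) \<Longrightarrow> min (bb p) (bb q) \<le> bb z \<Longrightarrow>
              min (cc p) (cc q) \<le> cc z \<Longrightarrow> z = p \<or> z = q"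
  shows "down_adj P p q"
proof -
  define c0 where "c0 = max (snd p) (snd q)"
  define B0 where "B0 = min (bb p) (bb q)"
  define C0 where "C0 = min (cc p) (cc q)"
  define T where "T = down_triangle ((B0 - c0) / sqrt 3) c0 ((2 * c0 - B0 - C0) / sqrt 3)"
  have s: "(2 * c0 - B0 - C0) / sqrt 3 \<ge> 0"
  proof -
    have "B0 + C0 \<le> bb p + cc p" unfolding B0_def C0_def by linarith
    also have "\<dots> = 2 * snd p" by (rule bc_sum)
    also have "\<dots> \<le> 2 * c0" unfolding c0_def by simp
    finally show ?thesis by simp
  qed
  have "p \<in> T" "q \<in> T" unfolding T_def mem_tri unfolding c0_def B0_def C0_def by auto
  moreover have "P \<inter> T \<subseteq> {p, q}"
  proof
    fix z assume zPT: "z \<in> P \<inter> T"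
    then have "snd z \<le> c0 \<and> B0 \<le> bb z \<and> C0 \<le> cc z" unfolding T_def by (simp only: mem_tri Int_iff)
    then show "z \<in> {p,q}" using H[of z] zPT unfolding c0_def B0_def C0_def by auto
  qed
  ultimately show ?thesis unfolding down_adj_def using assms(1-3) s T_def by blast
qed

lemma down_adj_sym: "down_adj P p q \<Longrightarrow> down_adj P q p"
  unfolding down_adj_def by (auto simp: insert_commute)




definition Dm :: "point set \<Rightarrow> point \<Rightarrow> point set" where
  "Dm P v = {x\<in>P. dm x v}"

definition kil :: "point set \<Rightarrow> point \<Rightarrow> point option" where
  "kil P v = (if Dm P v = {} then None else Some (SOME x. x \<in> Dm P v \<and> (\<forall>u\<in>Dm P v. snd x \<le> snd u)))"

definition sib :: "point set \<Rightarrow> point \<Rightarrow> point \<Rightarrow> bool" where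
  "sib P v s \<longleftrightarrow> s \<in> P \<and> kil P s = kil P v \<and> bb s < bb v"

definition par :: "point set \<Rightarrow> point \<Rightarrow> point option" where
  "par P v = (if \<exists>s. sib P v s then Some (SOME s. sib P v s \<and> (\<forall>t. sib P v t \<longrightarrow> bb t \<le> bb s))
              else kil P v)"

definition lowK :: "point option \<Rightarrow> point \<Rightarrow> bool" where
  "lowK K z = (case K of None \<Rightarrow> True | Some x \<Rightarrow> snd z < snd x)"

context
  fixes P :: "point set"
  assumes fin: "finite P" and gp: "general_position P"
begin

lemma gp_dist:
  assumes "p \<in> P" "q \<in> P" "p \<noteq> q"
  shows "snd p \<noteq> snd q" "bb p \<noteq> bb q" "cc p \<noteq> cc q"
proof -
  have g: "snd q - snd p \<noteq> 0" "snd q - snd p \<noteq> sqrt 3 * (fst q - fst p)"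
    "snd q - snd p \<noteq> - sqrt 3 * (fst q - fst p)"
    using gp assms unfolding general_position_def by auto
  show "snd p \<noteq> snd q" using g(1) by simp
  show "bb p \<noteq> bb q"
  proof
    assume "bb p = bb q"
    then have "snd q - snd p = - sqrt 3 * (fst q - fst p)"
      unfolding bb_def by (simp add: right_diff_distrib)
    then show False using g(3) by simp
  qed
  show "cc p \<noteq> cc q"
  proof
    assume "cc p = cc q"
    then have "snd q - snd p = sqrt 3 * (fst q - fst p)"
      unfolding cc_def by (simp add: right_diff_distrib)
    then show False using g(2) by simp
  qed
qed

lemma eq_snd: "p \<in> P \<Longrightarrow> q \<in> P \<Longrightarrow> snd p = snd q \<Longrightarrow> p = q"
  using gp_dist by blast
lemma eq_bb: "p \<in> P \<Longrightarrow> q \<in> P \<Longrightarrow> bb p = bb q \<Longrightarrow> p = q"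
  using gp_dist by blast
lemma eq_cc: "p \<in> P \<Longrightarrow> q \<in> P \<Longrightarrow> cc p = cc q \<Longrightarrow> p = q"
  using gp_dist by blast

lemma kil_None: "kil P v = None \<longleftrightarrow> Dm P v = {}"
  unfolding kil_def by auto

lemma kil_Some:
  assumes "kil P v = Some x"
  shows "x \<in> Dm P v" "\<forall>u\<in>Dm P v. snd x \<le> snd u"
proof -
  have ne: "Dm P v \<noteq> {}" using assms unfolding kil_def by (auto split: if_splits)
  have finD: "finite (Dm P v)" using fin unfolding Dm_def by simp
  have ex: "\<exists>x. x \<in> Dm P v \<and> (\<forall>u\<in>Dm P v. snd x \<le> snd u)"
    using ex_min_on[OF finD ne, of snd] by blast
  have "x = (SOME x. x \<in> Dm P v \<and> (\<forall>u\<in>Dm P v. snd x \<le> snd u))"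
    using assms ne unfolding kil_def by auto
  then have "x \<in> Dm P v \<and> (\<forall>u\<in>Dm P v. snd x \<le> snd u)"
    using someI_ex[OF ex] by simp
  then show "x \<in> Dm P v" "\<forall>u\<in>Dm P v. snd x \<le> snd u" by auto
qed

lemma kil_SomeI:
  assumes x: "x \<in> Dm P v" and m: "\<forall>u\<in>Dm P v. snd x \<le> snd u"
  shows "kil P v = Some x"
proof (cases "kil P v")
  case None
  then show ?thesis using x kil_None by auto
next
  case (Some y)
  have y: "y \<in> Dm P v" "\<forall>u\<in>Dm P v. snd y \<le> snd u" using kil_Some[OF Some] by auto
  have "snd x = snd y" using x y m by (meson order_antisym)
  moreover have "x \<in> P" "y \<in> P" using x y unfolding Dm_def by auto
  ultimately have "x = y" using eq_snd by blast
  then show ?thesis using Some by simp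
qed

lemma claimA:
  assumes "kil P v = K" "u \<in> Dm P v"
  shows "\<not> lowK K u"
proof (cases K)
  case None
  then show ?thesis using assms kil_None by auto
next
  case (Some x)
  then show ?thesis using assms kil_Some[of v x] unfolding lowK_def by force
qed

lemma claimA2:
  assumes "kil P v = K"
  shows "lowK K v"
proof (cases K)
  case None
  then show ?thesis unfolding lowK_def by simp
next
  case (Some x)
  then have "x \<in> Dm P v" using assms kil_Some by auto
  then show ?thesis using Some dm_snd unfolding lowK_def Dm_def by auto
qed

lemma claimB:
  assumes "lowK K w" "\<forall>u\<in>Dm P w. \<not> lowK K u" "\<And>x. K = Some x \<Longrightarrow> x \<in> Dm P w"
  shows "kil P w = K"
proof (cases K)
  case None
  then have "Dm P w = {}" using assms(2) unfolding lowK_def by auto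
  then show ?thesis using None kil_None by simp
next
  case (Some x)
  have "x \<in> Dm P w" using assms(3) Some by simp
  moreover have "\<forall>u\<in>Dm P w. snd x \<le> snd u" using assms(2) Some unfolding lowK_def by force
  ultimately show ?thesis using kil_SomeI Some by simp
qed

lemma E1:
  assumes v: "v \<in> P" and k: "kil P v = Some x"
  shows "down_adj P v x"
proof -
  have x: "x \<in> P" "dm x v" "\<forall>u\<in>Dm P v. snd x \<le> snd u" using kil_Some[OF k] unfolding Dm_def by auto
  have vx: "v \<noteq> x" using x(2) unfolding dm_def by auto
  have "snd v < snd x" using dm_snd[OF x(2)] .
  show ?thesis
  proof (rule adj_intro[OF v x(1) vx])
    fix z assume z: "z \<in> P" "snd z \<le> max (snd v) (snd x)" "min (bb v) (bb x) \<le> bb z"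
      "min (cc v) (cc x) \<le> cc z"
    show "z = v \<or> z = x"
    proof (cases "z = v")
      case False
      have "bb v \<le> bb z" "cc v \<le> cc z" using z x(2) unfolding dm_def by auto
      then have "bb v < bb z" "cc v < cc z" using False gp_dist[OF v z(1)] by auto
      then have "z \<in> Dm P v" using z(1) unfolding Dm_def dm_def by auto
      then have "snd x \<le> snd z" using x(3) by auto
      then have "snd z = snd x" using z(2) \<open>snd v < snd x\<close> by auto
      then show ?thesis using eq_snd z(1) x(1) by auto
    qed simp
  qed
qed

lemma E2:
  assumes v: "v \<in> P" and s: "sib P v s" and smax: "\<forall>t. sib P v t \<longrightarrow> bb t \<le> bb s"
  shows "down_adj P s v" "cc v < cc s"
proof -
  define K where "K = kil P v"
  have sP: "s \<in> P" and ks: "kil P s = K" and bsv: "bb s < bb v" using s unfolding sib_def K_def by auto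
  have lv: "lowK K v" using claimA2[OF K_def[symmetric]] .
  have ls: "lowK K s" using claimA2[OF ks] .
  have sv: "s \<noteq> v" using bsv by auto
  show ccs: "cc v < cc s"
  proof (rule ccontr)
    assume "\<not> cc v < cc s"
    then have "cc s < cc v" using gp_dist(3)[OF sP v sv] by auto
    then have "v \<in> Dm P s" using v bsv unfolding Dm_def dm_def by auto
    then show False using claimA[OF ks] lv by auto
  qed
  show "down_adj P s v"
  proof (rule adj_intro[OF sP v sv])
    fix z assume z: "z \<in> P" "snd z \<le> max (snd s) (snd v)" "min (bb s) (bb v) \<le> bb z"
      "min (cc s) (cc v) \<le> cc z"
    have zb: "bb s \<le> bb z" and zc: "cc v \<le> cc z" using z(3,4) bsv ccs by auto
    have lz: "lowK K z"
    proof (cases K)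
      case (Some x)
      then show ?thesis using lv ls z(2) unfolding lowK_def by auto
    qed (simp add: lowK_def)
    define W where "W = {w\<in>P. (w = z \<or> dm w z) \<and> lowK K w}"
    have finW: "finite W" using fin unfolding W_def by simp
    have "z \<in> W" using z(1) lz unfolding W_def by simp
    then obtain w where wW: "w \<in> W" and wmax: "\<forall>u\<in>W. snd u \<le> snd w"
      using ex_max_on[OF finW, of snd] by blast
    have wP: "w \<in> P" and wz: "w = z \<or> dm w z" and lw: "lowK K w" using wW unfolding W_def by auto
    have wzb: "bb z \<le> bb w" and wzc: "cc z \<le> cc w" using wz unfolding dm_def by auto
    have nodom: "\<forall>u\<in>Dm P w. \<not> lowK K u"
    proof
      fix u assume u: "u \<in> Dm P w"
      show "\<not> lowK K u"
      proof
        assume "lowK K u"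
        moreover have "dm u z"
        proof -
          have "dm u w" using u unfolding Dm_def by auto
          then show ?thesis using wz dm_trans by metis
        qed
        ultimately have "u \<in> W" using u unfolding W_def Dm_def by auto
        then have "snd u \<le> snd w" using wmax by auto
        moreover have "snd w < snd u" using u dm_snd unfolding Dm_def by auto
        ultimately show False by simp
      qed
    qed
    have wbv: "bb w \<le> bb v"
    proof (rule ccontr)
      assume "\<not> bb w \<le> bb v"
      then have bw: "bb v < bb w" by simp
      then have "w \<noteq> v" by auto
      then have "cc v < cc w" using gp_dist(3)[OF v wP] zc wzc by auto
      then have "w \<in> Dm P v" using wP bw unfolding Dm_def dm_def by auto
      then show False using claimA[of v K w] K_def lw by auto
    qed
    have wcs: "cc w \<le> cc s"
    proof (rule ccontr)
      assume "\<not> cc w \<le> cc s"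
      then have cw: "cc s < cc w" by simp
      then have "w \<noteq> s" by auto
      then have "bb s < bb w" using gp_dist(2)[OF sP wP] zb wzb by auto
      then have "w \<in> Dm P s" using wP cw unfolding Dm_def dm_def by auto
      then show False using claimA[OF ks, of w] lw by auto
    qed
    have kw: "kil P w = K"
    proof (rule claimB[OF lw nodom])
      fix x assume Kx: "K = Some x"
      have "x \<in> Dm P v" "x \<in> Dm P s" using kil_Some[of v x] kil_Some[of s x] Kx ks K_def by auto
      then show "x \<in> Dm P w" using wbv wcs wP unfolding Dm_def dm_def by auto
    qed
    have "w = s \<or> w = v"
    proof (rule ccontr)
      assume nw: "\<not> (w = s \<or> w = v)"
      then have "bb s < bb w" "bb w < bb v" using gp_dist(2)[OF sP wP] gp_dist(2)[OF wP v] zb wzb wbv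
        by (auto simp: less_le)
      then have "sib P v w" using wP kw unfolding sib_def K_def by auto
      then have "bb w \<le> bb s" using smax by blast
      then show False using \<open>bb s < bb w\<close> by simp
    qed
    then show "z = s \<or> z = v"
    proof
      assume "w = s"
      then have "bb z = bb w" using wz zb wzb unfolding dm_def by auto
      then show ?thesis using \<open>w = s\<close> wz unfolding dm_def by auto
    next
      assume "w = v"
      then have "cc z = cc w" using wz zc wzc unfolding dm_def by auto
      then show ?thesis using \<open>w = v\<close> wz unfolding dm_def by auto
    qed
  qed
qed

end



context
  fixes P :: "point set"
  assumes fin: "finite P" and gp: "general_position P"
begin

lemma par_sib_ex:
  assumes "\<exists>s. sib P v s"
  shows "\<exists>s. sib P v s \<and> (\<forall>t. sib P v t \<longrightarrow> bb t \<le> bb s)"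
proof -
  have finS: "finite {s. sib P v s}" using fin by (rule finite_subset[rotated]) (auto simp: sib_def)
  have "{s. sib P v s} \<noteq> {}" using assms by auto
  then show ?thesis using ex_max_on[OF finS, of bb] by auto
qed

lemma par_cases:
  assumes "par P v = Some p"
  shows "(sib P v p \<and> (\<forall>t. sib P v t \<longrightarrow> bb t \<le> bb p)) \<or> ((\<not>(\<exists>s. sib P v s)) \<and> kil P v = Some p)"
proof (cases "\<exists>s. sib P v s")
  case True
  have "p = (SOME s. sib P v s \<and> (\<forall>t. sib P v t \<longrightarrow> bb t \<le> bb s))"
    using assms True unfolding par_def by auto
  then have "sib P v p \<and> (\<forall>t. sib P v t \<longrightarrow> bb t \<le> bb p)"
    using someI_ex[OF par_sib_ex[OF True]] by simp
  then show ?thesis by blast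
next
  case False
  then show ?thesis using assms unfolding par_def by auto
qed

lemma par_None:
  assumes "par P v = None"
  shows "\<not>(\<exists>s. sib P v s) \<and> kil P v = None"
  using assms unfolding par_def by (auto split: if_splits)

lemma par_edge:
  assumes v: "v \<in> P" and pv: "par P v = Some p"
  shows "p \<in> P \<and> cc v < cc p \<and> down_adj P v p"
  using par_cases[OF pv]
proof
  assume a: "sib P v p \<and> (\<forall>t. sib P v t \<longrightarrow> bb t \<le> bb p)"
  then have "down_adj P p v" "cc v < cc p" using E2[OF fin gp v] by auto
  moreover have "p \<in> P" using a unfolding sib_def by auto
  ultimately show ?thesis using down_adj_sym by blast
next
  assume a: "\<not>(\<exists>s. sib P v s) \<and> kil P v = Some p"
  then have "p \<in> Dm P v" using kil_Some[OF fin gp] by blast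
  then have "p \<in> P" "cc v < cc p" unfolding Dm_def dm_def by auto
  moreover have "down_adj P v p" using E1[OF fin gp v] a by blast
  ultimately show ?thesis by blast
qed

lemma sib_of: "v1 \<in> P \<Longrightarrow> kil P v1 = kil P v2 \<Longrightarrow> bb v1 < bb v2 \<Longrightarrow> sib P v2 v1"
  unfolding sib_def by auto

lemma subsing_card:
  assumes "A \<subseteq> P" "\<And>x y. x \<in> A \<Longrightarrow> y \<in> A \<Longrightarrow> x = y"
  shows "card A \<le> 1"
proof -
  have "finite A" using assms(1) fin finite_subset by auto
  then show ?thesis using card_le_Suc0_iff_eq assms(2) by (metis One_nat_def)
qed

lemma wlog_bb:
  assumes "x \<in> P" "y \<in> P"
    and "\<And>x y. x \<in> P \<Longrightarrow> y \<in> P \<Longrightarrow> Q x \<Longrightarrow> Q y \<Longrightarrow> bb x < bb y \<Longrightarrow> False"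
    and "Q x" "Q y"
  shows "x = y"
proof (rule ccontr)
  assume "x \<noteq> y"
  then have "bb x \<noteq> bb y" using gp_dist(2)[OF fin gp assms(1,2)] by auto
  then show False using assms by (metis linorder_neqE)
qed

lemma children:
  assumes "p \<in> P"
  shows "card {v\<in>P. par P v = Some p} \<le> 2"
proof -
  define A where "A = {v\<in>P. sib P v p \<and> (\<forall>t. sib P v t \<longrightarrow> bb t \<le> bb p)}"
  define B where "B = {v\<in>P. \<not>(\<exists>s. sib P v s) \<and> kil P v = Some p}"
  have "{v\<in>P. par P v = Some p} \<subseteq> A \<union> B" unfolding A_def B_def using par_cases by blast
  moreover have "finite (A \<union> B)" using fin unfolding A_def B_def by simp
  ultimately have "card {v\<in>P. par P v = Some p} \<le> card (A \<union> B)" by (rule card_mono[rotated])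
  also have "\<dots> \<le> card A + card B" by (rule card_Un_le)
  also have "card A \<le> 1"
  proof (rule subsing_card)
    show "A \<subseteq> P" unfolding A_def by auto
    fix x y assume "x \<in> A" "y \<in> A"
    show "x = y"
    proof (rule wlog_bb[where Q = "\<lambda>v. v \<in> A"])
      fix x y assume xy: "x \<in> P" "y \<in> P" "x \<in> A" "y \<in> A" "bb x < bb y"
      have "kil P x = kil P p" "kil P y = kil P p" "bb p < bb x"
        using xy unfolding A_def sib_def by auto
      then have "sib P y x" using sib_of xy by auto
      then have "bb x \<le> bb p" using xy(4) unfolding A_def by blast
      then show False using \<open>bb p < bb x\<close> by simp
    qed (use \<open>x \<in> A\<close> \<open>y \<in> A\<close> A_def in auto)
  qed
  also have "card B \<le> 1"
  proof (rule subsing_card)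
    show "B \<subseteq> P" unfolding B_def by auto
    fix x y assume "x \<in> B" "y \<in> B"
    show "x = y"
    proof (rule wlog_bb[where Q = "\<lambda>v. v \<in> B"])
      fix x y assume xy: "x \<in> P" "y \<in> P" "x \<in> B" "y \<in> B" "bb x < bb y"
      have "kil P x = kil P y" using xy unfolding B_def by auto
      then have "sib P y x" using sib_of xy by auto
      then show False using xy(4) unfolding B_def by blast
    qed (use \<open>x \<in> B\<close> \<open>y \<in> B\<close> B_def in auto)
  qed
  finally show ?thesis by simp
qed

lemma roots: "card {v\<in>P. par P v = None} \<le> 1"
proof (rule subsing_card)
  show "{v\<in>P. par P v = None} \<subseteq> P" by auto
  fix x y assume "x \<in> {v\<in>P. par P v = None}" "y \<in> {v\<in>P. par P v = None}"
  show "x = y"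
  proof (rule wlog_bb[where Q = "\<lambda>v. par P v = None"])
    fix x y assume xy: "x \<in> P" "y \<in> P" "par P x = None" "par P y = None" "bb x < bb y"
    have "kil P x = kil P y" "\<not>(\<exists>s. sib P y s)" using par_None xy(3,4) by auto
    then show False using sib_of xy by blast
  qed (use \<open>x \<in> {v\<in>P. par P v = None}\<close> \<open>y \<in> {v\<in>P. par P v = None}\<close> in auto)
qed

lemma main_matching:
  "\<exists>M. down_matching P M \<and> finite M \<and> card P \<le> 3 * card M + 1"
proof -
  obtain M where Me: "\<forall>e\<in>M. \<exists>v p. e = {v,p} \<and> v \<in> P \<and> par P v = Some p"
    and Md: "\<forall>e\<in>M. \<forall>f\<in>M. e \<noteq> f \<longrightarrow> e \<inter> f = {}" and Mf: "finite M"
    and Mc: "card P \<le> 3 * card M + card {v\<in>P. par P v = None}"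
    using forest_matching[of P "par P" cc, OF fin] par_edge children by blast
  have "down_matching P M"
    unfolding down_matching_def
  proof (intro conjI ballI)
    fix e assume "e \<in> M"
    then obtain v p where "e = {v,p}" "v \<in> P" "par P v = Some p" using Me by blast
    then show "\<exists>p q. e = {p, q} \<and> down_adj P p q" using par_edge by blast
  qed (use Md in auto)
  then show ?thesis using Mf Mc roots by fastforce
qed

end

theorem theorem2:
  fixes P :: "point set" and n :: nat
  assumes "finite P" and "card P = n" and "n \<ge> 2" and "general_position P"
  shows "\<exists>M. down_matching P M \<and> finite M \<and>
           real (card M) \<ge> of_int \<lceil>(real n - 2) / 3\<rceil>"
proof -
  obtain M where M: "down_matching P M" "finite M" "card P \<le> 3 * card M + 1"
    using main_matching[OF assms(1) assms(4)] by blast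
  have "real n \<le> 3 * real (card M) + 1" using M(3) assms(2) by linarith
  then have "(real n - 2) / 3 \<le> of_int (int (card M))" by simp
  then have "\<lceil>(real n - 2) / 3\<rceil> \<le> int (card M)" by (simp add: ceiling_le_iff)
  then have "of_int \<lceil>(real n - 2) / 3\<rceil> \<le> real (card M)" by linarith
  then show ?thesis using M by blast
qed


end
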